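(* Let $k\ge1$, $G=(V,E)$ an inductively $k$-independent graph with $k$-independence ordering $v_1,\dots,v_n$, $f:2^V\to\mathbb{R}_{\ge0}$ monotone submodular with $f(\emptyset)=0$, and $\beta>0$. Let $S_{\mathrm{end}}$ and $w_1,\dots,w_n$ be as produced by Phase 1 of algorithm PD-MON (described in the context), and let $\mathrm{OPT}=\max\{f(T):T\text{ independent in }G\}$. Then \[ \mathrm{OPT}\le f(S_{\mathrm{end}})+k(1+\beta)\sum_{i=1}^n w_i. \]
   Context: $N(v)$ is the neighbourhood of $v$ (excluding $v$); $G$ is inductively $k$-independent with $k$-independence ordering $v_1,\dots,v_n$ if for every $i$, $G[N(v_i)\cap\{v_i,\dots,v_n\}]$ has no independent set of size more than $k$. For $S\subseteq V$, $f_S(v)=f(S\cup\{v\})-f(S)$. Phase 1 of algorithm PD-MON (parameter $\beta>0$): start with $S=\emptyset$ and $w_1=\dots=w_n=0$. For $i=1,\dots,n$: let $C_i=N(v_i)\cap S$ for the current $S$; if $f_S(v_i)>(1+\beta)\sum_{v_j\in C_i}w_j$, set $w_i=f_S(v_i)-\sum_{v_j\in C_i}w_j$ (with $S$ the set before insertion) and add $v_i$ to $S$; otherwise leave $w_i=0$. $S_{\mathrm{end}}$ is $S$ at the end of this phase. *)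

theory Defs
  imports Complex_Main
begin

definition simple_graph :: "'a set \<Rightarrow> ('a \<Rightarrow> 'a \<Rightarrow> bool) \<Rightarrow> bool" where
  "simple_graph V E \<longleftrightarrow> finite V \<and> (\<forall>u v. E u v \<longrightarrow> u \<in> V \<and> v \<in> V)
     \<and> (\<forall>u v. E u v \<longrightarrow> E v u) \<and> (\<forall>v. \<not> E v v)"

definition nbhd :: "'a set \<Rightarrow> ('a \<Rightarrow> 'a \<Rightarrow> bool) \<Rightarrow> 'a \<Rightarrow> 'a set" where
  "nbhd V E v = {u \<in> V. E v u}"

definition indep_set :: "'a set \<Rightarrow> ('a \<Rightarrow> 'a \<Rightarrow> bool) \<Rightarrow> 'a set \<Rightarrow> bool" where
  "indep_set V E I \<longleftrightarrow> I \<subseteq> V \<and> (\<forall>u\<in>I. \<forall>v\<in>I. \<not> E u v)"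

definition k_independence_ordering ::
  "nat \<Rightarrow> 'a set \<Rightarrow> ('a \<Rightarrow> 'a \<Rightarrow> bool) \<Rightarrow> 'a list \<Rightarrow> bool" where
  "k_independence_ordering k V E vs \<longleftrightarrow> distinct vs \<and> set vs = V \<and>
     (\<forall>i < length vs. \<forall>I. I \<subseteq> nbhd V E (vs ! i) \<inter> set (drop i vs) \<and> indep_set V E I
        \<longrightarrow> card I \<le> k)"

definition monotone_set_fun :: "'a set \<Rightarrow> ('a set \<Rightarrow> real) \<Rightarrow> bool" where
  "monotone_set_fun V f \<longleftrightarrow> (\<forall>A B. A \<subseteq> B \<and> B \<subseteq> V \<longrightarrow> f A \<le> f B)"

definition submodular :: "'a set \<Rightarrow> ('a set \<Rightarrow> real) \<Rightarrow> bool" where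
  "submodular V f \<longleftrightarrow> (\<forall>A B. A \<subseteq> V \<and> B \<subseteq> V \<longrightarrow> f (A \<union> B) + f (A \<inter> B) \<le> f A + f B)"

definition pd_step :: "('a \<Rightarrow> 'a \<Rightarrow> bool) \<Rightarrow> ('a set \<Rightarrow> real) \<Rightarrow> real \<Rightarrow> 'a
    \<Rightarrow> 'a set \<times> ('a \<Rightarrow> real) \<Rightarrow> 'a set \<times> ('a \<Rightarrow> real)" where
  "pd_step E f \<beta> v Sw = (let S = fst Sw; w = snd Sw; C = {u \<in> S. E v u};
       m = f (S \<union> {v}) - f S; s = (\<Sum>u\<in>C. w u)
     in if m > (1 + \<beta>) * s then (insert v S, w(v := m - s)) else (S, w(v := 0)))"

text \<open>Phase 1: start with S = {} and all weights 0, process v_1,...,v_n in order.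
  Returns (S_end, w) where w v_i is the weight w_i.\<close>
definition pd_phase1 :: "('a \<Rightarrow> 'a \<Rightarrow> bool) \<Rightarrow> ('a set \<Rightarrow> real) \<Rightarrow> real \<Rightarrow> 'a list
    \<Rightarrow> 'a set \<times> ('a \<Rightarrow> real)" where
  "pd_phase1 E f \<beta> vs = fold (pd_step E f \<beta>) vs ({}, (\<lambda>_. 0))"

end

theory Submission
  imports Defs
begin

definition stt :: "('a \<Rightarrow> 'a \<Rightarrow> bool) \<Rightarrow> ('a set \<Rightarrow> real) \<Rightarrow> real \<Rightarrow> 'a list \<Rightarrow> nat
    \<Rightarrow> 'a set \<times> ('a \<Rightarrow> real)" where
  "stt E f \<beta> vs i = fold (pd_step E f \<beta>) (take i vs) ({}, (\<lambda>_. 0))"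

lemma stt_Suc: "i < length vs \<Longrightarrow> stt E f \<beta> vs (Suc i) = pd_step E f \<beta> (vs ! i) (stt E f \<beta> vs i)"
  unfolding stt_def by (simp add: take_Suc_conv_app_nth)

lemma stt_0: "stt E f \<beta> vs 0 = ({}, (\<lambda>_. 0))"
  unfolding stt_def by simp

lemma stt_end: "stt E f \<beta> vs (length vs) = pd_phase1 E f \<beta> vs"
  unfolding stt_def pd_phase1_def by simp

lemma step_fst_sub: "fst (pd_step E f \<beta> v Sw) \<subseteq> insert v (fst Sw)"
  unfolding pd_step_def Let_def by auto

lemma step_fst_sup: "fst Sw \<subseteq> fst (pd_step E f \<beta> v Sw)"
  unfolding pd_step_def Let_def by auto

lemma step_snd_other: "u \<noteq> v \<Longrightarrow> snd (pd_step E f \<beta> v Sw) u = snd Sw u"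
  unfolding pd_step_def Let_def by auto

lemma step_snd_nonneg:
  assumes "\<forall>u. snd Sw u \<ge> 0" "\<beta> > 0"
  shows "\<forall>u. snd (pd_step E f \<beta> v Sw) u \<ge> 0"
proof -
  have s: "(\<Sum>u\<in>{u \<in> fst Sw. E v u}. snd Sw u) \<ge> 0" using assms by (simp add: sum_nonneg)
  show ?thesis
  proof
    fix u
    show "snd (pd_step E f \<beta> v Sw) u \<ge> 0"
    proof (cases "u = v")
      case True
      have "(1 + \<beta>) * (\<Sum>u\<in>{u \<in> fst Sw. E v u}. snd Sw u) \<ge> (\<Sum>u\<in>{u \<in> fst Sw. E v u}. snd Sw u)"
        using s assms(2) by (simp add: mult_le_cancel_right1 algebra_simps)
      then show ?thesis using True unfolding pd_step_def Let_def by auto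
    next
      case False
      then show ?thesis using assms step_snd_other[OF False] by simp
    qed
  qed
qed

lemma step_reject:
  assumes "v \<notin> fst (pd_step E f \<beta> v Sw)"
  shows "f (fst Sw \<union> {v}) - f (fst Sw) \<le> (1 + \<beta>) * (\<Sum>u\<in>{u \<in> fst Sw. E v u}. snd Sw u)"
  using assms unfolding pd_step_def Let_def by (auto split: if_splits)

lemma distinct_not_in_take:
  assumes "distinct vs" "j < length vs" "i \<le> j"
  shows "vs ! j \<notin> set (take i vs)"
proof
  assume "vs ! j \<in> set (take i vs)"
  then obtain a where a: "a < length (take i vs)" "take i vs ! a = vs ! j"
    by (auto simp: in_set_conv_nth)
  then have "vs ! a = vs ! j" "a < i" by auto
  then show False using assms nth_eq_iff_index_eq by fastforce
qed

context
  fixes E :: "'a \<Rightarrow> 'a \<Rightarrow> bool" and f :: "'a set \<Rightarrow> real" and \<beta> :: real and vs :: "'a list"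
  assumes dist: "distinct vs" and bpos: "\<beta> > 0"
begin

lemma inv1: "i \<le> length vs \<Longrightarrow> fst (stt E f \<beta> vs i) \<subseteq> set (take i vs)"
proof (induction i)
  case 0 then show ?case by (simp add: stt_0)
next
  case (Suc i)
  then have "fst (stt E f \<beta> vs (Suc i)) \<subseteq> insert (vs ! i) (set (take i vs))"
    using stt_Suc[of i vs E f \<beta>] step_fst_sub[of E f \<beta> "vs ! i" "stt E f \<beta> vs i"] by auto
  also have "\<dots> = set (take (Suc i) vs)" using Suc.prems by (simp add: take_Suc_conv_app_nth)
  finally show ?case .
qed

lemma inv2: "i \<le> length vs \<Longrightarrow> \<forall>u. snd (stt E f \<beta> vs i) u \<ge> 0"
proof (induction i)
  case 0 then show ?case by (simp add: stt_0)
next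
  case (Suc i)
  then have "\<forall>u. snd (stt E f \<beta> vs i) u \<ge> 0" "i < length vs" by auto
  then show ?case using stt_Suc[of i vs E f \<beta>] step_snd_nonneg[OF _ bpos, of "stt E f \<beta> vs i" E f "vs ! i"] by simp
qed

lemma mono_S: "j \<le> length vs \<Longrightarrow> i \<le> j \<Longrightarrow> fst (stt E f \<beta> vs i) \<subseteq> fst (stt E f \<beta> vs j)"
proof (induction j)
  case 0 then show ?case by simp
next
  case (Suc j)
  show ?case
  proof (cases "i = Suc j")
    case True then show ?thesis by simp
  next
    case False
    then have "fst (stt E f \<beta> vs i) \<subseteq> fst (stt E f \<beta> vs j)" using Suc by simp
    also have "\<dots> \<subseteq> fst (stt E f \<beta> vs (Suc j))"
      using stt_Suc[of j vs E f \<beta>] Suc.prems step_fst_sup[of "stt E f \<beta> vs j" E f \<beta> "vs ! j"] by simp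
    finally show ?thesis .
  qed
qed

lemma weight_keep: "j \<le> length vs \<Longrightarrow> i \<le> j \<Longrightarrow> u \<in> set (take i vs) \<Longrightarrow>
   snd (stt E f \<beta> vs j) u = snd (stt E f \<beta> vs i) u"
proof (induction j)
  case 0 then show ?case by simp
next
  case (Suc j)
  show ?case
  proof (cases "i = Suc j")
    case True then show ?thesis by simp
  next
    case False
    then have ij: "i \<le> j" using Suc.prems(2) by simp
    have jl: "j < length vs" using Suc.prems(1) by simp
    have "vs ! j \<notin> set (take i vs)" by (rule distinct_not_in_take[OF dist jl ij])
    then have "u \<noteq> vs ! j" using Suc.prems(3) by blast
    with jl have "snd (stt E f \<beta> vs (Suc j)) u = snd (stt E f \<beta> vs j) u"
      using stt_Suc[of j vs E f \<beta>] step_snd_other[of u "vs ! j" E f \<beta>] by simp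
    then show ?thesis using Suc ij by simp
  qed
qed

end

lemma diminishing:
  assumes mono: "monotone_set_fun V f" and sub: "submodular V f"
    and "A \<subseteq> B" "B \<subseteq> V" "v \<in> V"
  shows "f (B \<union> {v}) - f B \<le> f (A \<union> {v}) - f A"
proof (cases "v \<in> B")
  case True
  then have "B \<union> {v} = B" by auto
  moreover have "A \<union> {v} \<subseteq> V" "A \<subseteq> A \<union> {v}" using assms by auto
  then have "f A \<le> f (A \<union> {v})" using mono unfolding monotone_set_fun_def by blast
  ultimately show ?thesis by simp
next
  case False
  have "f ((A \<union> {v}) \<union> B) + f ((A \<union> {v}) \<inter> B) \<le> f (A \<union> {v}) + f B"
  proof -
    have h: "A \<union> {v} \<subseteq> V \<and> B \<subseteq> V" using assms by auto
    from sub h show ?thesis unfolding submodular_def by blast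
  qed
  moreover have "(A \<union> {v}) \<union> B = B \<union> {v}" "(A \<union> {v}) \<inter> B = A" using False assms by auto
  ultimately show ?thesis by simp
qed

lemma sum_bound:
  assumes mono: "monotone_set_fun V f" and sub: "submodular V f"
    and "finite X" "S \<subseteq> V" "X \<subseteq> V"
  shows "f (S \<union> X) \<le> f S + (\<Sum>x\<in>X. f (S \<union> {x}) - f S)"
  using assms(3,5)
proof (induction X rule: finite_induct)
  case empty then show ?case by simp
next
  case (insert x X)
  have "f ((S \<union> X) \<union> {x}) - f (S \<union> X) \<le> f (S \<union> {x}) - f S"
    by (rule diminishing[OF mono sub]) (use insert assms in auto)
  moreover have "S \<union> insert x X = (S \<union> X) \<union> {x}" by auto
  ultimately show ?case using insert by simp
qed

theorem corollary1:
  fixes k :: nat and V :: "'a set" and E :: "'a \<Rightarrow> 'a \<Rightarrow> bool" and vs :: "'a list"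
    and f :: "'a set \<Rightarrow> real" and \<beta> :: real
  assumes "k \<ge> 1"
    and "simple_graph V E"
    and "k_independence_ordering k V E vs"
    and "\<forall>A. A \<subseteq> V \<longrightarrow> f A \<ge> 0"
    and "monotone_set_fun V f"
    and "submodular V f"
    and "f {} = 0"
    and "\<beta> > 0"
  shows "Max (f ` {T. indep_set V E T})
    \<le> f (fst (pd_phase1 E f \<beta> vs))
       + real k * (1 + \<beta>) * (\<Sum>i<length vs. snd (pd_phase1 E f \<beta> vs) (vs ! i))"
proof -
  have dist: "distinct vs" and setv: "set vs = V" and kio: "\<And>i I. i < length vs \<Longrightarrow>
      I \<subseteq> nbhd V E (vs ! i) \<inter> set (drop i vs) \<Longrightarrow> indep_set V E I \<Longrightarrow> card I \<le> k"
    using assms(3) unfolding k_independence_ordering_def by auto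
  have finV: "finite V" and Esym: "\<And>u v. E u v \<Longrightarrow> E v u"
    using assms(2) unfolding simple_graph_def by auto
  let ?n = "length vs"
  define Send where "Send = fst (pd_phase1 E f \<beta> vs)"
  define W where "W = snd (pd_phase1 E f \<beta> vs)"
  define idx where "idx v = (SOME i. i < ?n \<and> vs ! i = v)" for v
  define Q where "Q v u \<longleftrightarrow> u \<in> set (take (idx v) vs)" for v u
  have idx: "idx v < ?n \<and> vs ! idx v = v" if "v \<in> V" for v
  proof -
    have "\<exists>i. i < ?n \<and> vs ! i = v" using that setv by (auto simp: in_set_conv_nth)
    then show ?thesis unfolding idx_def by (rule someI_ex)
  qed
  have idx_nth: "idx (vs ! i) = i" if "i < ?n" for i
    using idx[of "vs ! i"] that setv dist nth_eq_iff_index_eq by fastforce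
  have Send_eq: "Send = fst (stt E f \<beta> vs ?n)" and W_eq: "W = snd (stt E f \<beta> vs ?n)"
    unfolding Send_def W_def stt_end by auto
  have bp: "\<beta> > 0" using assms(8) .
  have Wnn: "\<And>u. W u \<ge> 0" using inv2[OF dist bp, of ?n] W_eq by simp
  have SendV: "Send \<subseteq> V" using inv1[OF dist bp, of ?n] Send_eq setv by auto
  have marg: "f (Send \<union> {v}) - f Send \<le> (1 + \<beta>) * (\<Sum>u\<in>{u\<in>V. E v u \<and> Q v u}. W u)"
    if v: "v \<in> V" "v \<notin> Send" for v
  proof -
    define i where "i = idx v"
    have i: "i < ?n" "vs ! i = v" using idx[OF v(1)] i_def by auto
    define Si where "Si = fst (stt E f \<beta> vs i)"
    define wi where "wi = snd (stt E f \<beta> vs i)"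
    have SiT: "Si \<subseteq> set (take i vs)" using inv1[OF dist bp, of i] i Si_def by auto
    have "fst (stt E f \<beta> vs (Suc i)) \<subseteq> Send" using mono_S[OF dist bp, of ?n "Suc i"] i Send_eq by auto
    then have "v \<notin> fst (pd_step E f \<beta> v (Si, wi))"
      using stt_Suc[of i vs E f \<beta>] i v Si_def wi_def by auto
    then have r: "f (Si \<union> {v}) - f Si \<le> (1 + \<beta>) * (\<Sum>u\<in>{u \<in> Si. E v u}. wi u)"
      using step_reject[of v E f \<beta> "(Si, wi)"] by simp
    have "Si \<subseteq> Send" using mono_S[OF dist bp, of ?n i] i Send_eq Si_def by auto
    then have d: "f (Send \<union> {v}) - f Send \<le> f (Si \<union> {v}) - f Si"
      using diminishing[OF assms(5,6) _ SendV v(1)] by blast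
    have "(\<Sum>u\<in>{u \<in> Si. E v u}. wi u) = (\<Sum>u\<in>{u \<in> Si. E v u}. W u)"
    proof (rule sum.cong)
      fix u assume "u \<in> {u \<in> Si. E v u}"
      then have "u \<in> set (take i vs)" using SiT by auto
      then show "wi u = W u" using weight_keep[OF dist bp, of ?n i u] i W_eq wi_def by auto
    qed simp
    also have "\<dots> \<le> (\<Sum>u\<in>{u\<in>V. E v u \<and> Q v u}. W u)"
    proof (rule sum_mono2)
      show "finite {u\<in>V. E v u \<and> Q v u}" using finV by simp
      show "{u \<in> Si. E v u} \<subseteq> {u\<in>V. E v u \<and> Q v u}"
        using SiT set_take_subset[of i vs] setv unfolding Q_def i_def by auto
    qed (use Wnn in auto)
    finally have "(1 + \<beta>) * (\<Sum>u\<in>{u \<in> Si. E v u}. wi u) \<le> (1 + \<beta>) * (\<Sum>u\<in>{u\<in>V. E v u \<and> Q v u}. W u)"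
      using bp by (intro mult_left_mono) auto
    then show ?thesis using r d by linarith
  qed
  have count: "card {v \<in> R. E v u \<and> Q v u} \<le> k" if T: "indep_set V E T" and R: "R = T - Send"
    and u: "u \<in> V" for T R u
  proof -
    have iu: "idx u < ?n" "vs ! idx u = u" using idx[OF u] by auto
    show ?thesis
    proof (rule kio[OF iu(1)])
      show "indep_set V E {v \<in> R. E v u \<and> Q v u}" using T R unfolding indep_set_def by auto
      show "{v \<in> R. E v u \<and> Q v u} \<subseteq> nbhd V E (vs ! idx u) \<inter> set (drop (idx u) vs)"
      proof
        fix v assume vin: "v \<in> {v \<in> R. E v u \<and> Q v u}"
        then have vV: "v \<in> V" using T R unfolding indep_set_def by auto
        have iv: "idx v < ?n" "vs ! idx v = v" using idx[OF vV] by auto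
        from vin have "u \<in> set (take (idx v) vs)" unfolding Q_def by auto
        then obtain a where a: "a < idx v" "vs ! a = u"
          by (auto simp: in_set_conv_nth)
        have "idx u = a" using idx_nth[of a] a iv by auto
        have "drop a vs ! (idx v - a) = v" using a iv by auto
        moreover have "idx v - a < length (drop a vs)" using a iv by auto
        ultimately have "v \<in> set (drop a vs)" by (metis nth_mem)
        moreover have "v \<in> nbhd V E u" using vin vV Esym unfolding nbhd_def by auto
        ultimately show "v \<in> nbhd V E (vs ! idx u) \<inter> set (drop (idx u) vs)"
          using iu \<open>idx u = a\<close> by auto
      qed
    qed
  qed
  have sumW: "(\<Sum>i<?n. W (vs ! i)) = (\<Sum>u\<in>V. W u)"
  proof -
    have "(\<Sum>u\<in>V. W u) = (\<Sum>u\<in>(!) vs ` {..<?n}. W u)"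
    proof -
      have "(!) vs ` {..<?n} = set vs" by (auto simp: in_set_conv_nth)
      then show ?thesis using setv by simp
    qed
    also have "\<dots> = (\<Sum>i<?n. W (vs ! i))"
      by (rule sum.reindex_cong[where l="(!) vs"]) (auto intro: inj_on_nth[OF dist])
    finally show ?thesis by simp
  qed
  have main: "f T \<le> f Send + real k * (1 + \<beta>) * (\<Sum>u\<in>V. W u)" if T: "indep_set V E T" for T
  proof -
    define R where "R = T - Send"
    have TV: "T \<subseteq> V" using T unfolding indep_set_def by auto
    have RV: "R \<subseteq> V" and finR: "finite R" using TV finV R_def by (auto intro: finite_subset)
    have a1: "f T \<le> f (Send \<union> R)"
      using assms(5) TV SendV unfolding monotone_set_fun_def R_def by auto
    have a2: "f (Send \<union> R) \<le> f Send + (\<Sum>v\<in>R. f (Send \<union> {v}) - f Send)"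
      by (rule sum_bound[OF assms(5,6) finR SendV RV])
    have a3: "(\<Sum>v\<in>R. f (Send \<union> {v}) - f Send) \<le> (\<Sum>v\<in>R. (1 + \<beta>) * (\<Sum>u\<in>{u\<in>V. E v u \<and> Q v u}. W u))"
      by (rule sum_mono) (use marg RV R_def in auto)
    have "(\<Sum>v\<in>R. \<Sum>u\<in>{u\<in>V. E v u \<and> Q v u}. W u) = (\<Sum>v\<in>R. \<Sum>u\<in>V. if E v u \<and> Q v u then W u else 0)"
      by (simp add: sum.inter_filter[OF finV])
    also have "\<dots> = (\<Sum>u\<in>V. \<Sum>v\<in>R. if E v u \<and> Q v u then W u else 0)"
      by (rule sum.swap)
    also have "\<dots> = (\<Sum>u\<in>V. W u * real (card {v \<in> R. E v u \<and> Q v u}))"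
      by (rule sum.cong) (simp_all add: sum.If_cases[OF finR] mult.commute Int_def)
    also have "\<dots> \<le> (\<Sum>u\<in>V. W u * real k)"
      by (rule sum_mono) (use count[OF T R_def] Wnn in \<open>auto intro: mult_left_mono\<close>)
    also have "\<dots> = real k * (\<Sum>u\<in>V. W u)"
      by (simp add: sum_distrib_left mult.commute)
    finally have a4: "(\<Sum>v\<in>R. \<Sum>u\<in>{u\<in>V. E v u \<and> Q v u}. W u) \<le> real k * (\<Sum>u\<in>V. W u)" .
    have a5: "(\<Sum>v\<in>R. (1 + \<beta>) * (\<Sum>u\<in>{u\<in>V. E v u \<and> Q v u}. W u))
        = (1 + \<beta>) * (\<Sum>v\<in>R. \<Sum>u\<in>{u\<in>V. E v u \<and> Q v u}. W u)"
      by (simp add: sum_distrib_left)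
    have a6: "(1 + \<beta>) * (\<Sum>v\<in>R. \<Sum>u\<in>{u\<in>V. E v u \<and> Q v u}. W u) \<le> (1 + \<beta>) * (real k * (\<Sum>u\<in>V. W u))"
      using a4 bp by (intro mult_left_mono) auto
    show ?thesis using a1 a2 a3 a5 a6 by (simp add: algebra_simps)
  qed
  have fin: "finite {T. indep_set V E T}"
    by (rule finite_subset[of _ "Pow V"]) (use finV in \<open>auto simp: indep_set_def\<close>)
  have ne: "{T. indep_set V E T} \<noteq> {}" by (auto simp: indep_set_def)
  show ?thesis
    using main fin ne sumW unfolding Send_def[symmetric] W_def[symmetric]
    by (subst Max_le_iff) auto
qed

end
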